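(* For integers $1\le m\le n$, $[\mathbb{Q}(x_1,\dots,x_n,\mathrm{EC}_m):\mathbb{Q}(x_1,\dots,x_n)]=2^{m-1}$, where $\mathrm{EC}_m=\mathrm{EC}_m(x_1,\dots,x_m)$.
   Context: Let $x_1,\dots,x_n$ be algebraically independent indeterminates over $\mathbb{Q}$; in an algebraic closure of $\mathbb{Q}(x_1,\dots,x_n)$ fix $y_1,\dots,y_n$ with $y_j^2=1-x_j^2$. $\mathrm{EC}_m(x_1,\dots,x_m)=\sum_{S\subseteq\{1,\dots,m\},\ |S|\text{ even}}(-1)^{|S|/2}\prod_{j\in S}y_j\prod_{j\notin S}x_j$. *)

theory Defs
  imports "HOL-Algebra.Algebraic_Closure_Type" "HOL-Algebra.Generated_Fields"
begin

text \<open>Algebraic independence over the rationals of the family x i, i in I (I finite):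
  distinct monomials in the x i are linearly independent over the rationals, i.e. no
  nonzero polynomial with rational coefficients in the variables indexed by I
  vanishes at x.\<close>
definition alg_indep_over_Q :: "(nat \<Rightarrow> 'a::field_char_0) \<Rightarrow> nat set \<Rightarrow> bool" where
  "alg_indep_over_Q x I \<longleftrightarrow>
     (\<forall>(A :: (nat \<Rightarrow> nat) set) (c :: (nat \<Rightarrow> nat) \<Rightarrow> rat).
        finite A \<longrightarrow> (\<forall>\<alpha>\<in>A. \<forall>i. i \<notin> I \<longrightarrow> \<alpha> i = 0) \<longrightarrow>
        (\<Sum>\<alpha>\<in>A. of_rat (c \<alpha>) * (\<Prod>i\<in>I. x i ^ \<alpha> i)) = 0 \<longrightarrow>
        (\<forall>\<alpha>\<in>A. c \<alpha> = 0))"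

definition EC :: "nat \<Rightarrow> (nat \<Rightarrow> 'a::comm_ring_1) \<Rightarrow> (nat \<Rightarrow> 'a) \<Rightarrow> 'a" where
  "EC m x y = (\<Sum>S\<in>{S. S \<subseteq> {1..m} \<and> even (card S)}.
      (-1) ^ (card S div 2) * (\<Prod>j\<in>S. y j) * (\<Prod>j\<in>{1..m} - S. x j))"

end

theory Submission
  imports Defs
begin

definition mon :: "(nat \<Rightarrow> 'a::field_char_0) \<Rightarrow> nat set \<Rightarrow> (nat \<Rightarrow> nat) \<Rightarrow> 'a" where
  "mon x J \<alpha> = (\<Prod>i\<in>J. x i ^ \<alpha> i)"

definition expl :: "(nat \<Rightarrow> 'a::field_char_0) \<Rightarrow> nat set \<Rightarrow> 'a \<Rightarrow> bool" where
  "expl x J a \<longleftrightarrow> (\<exists>A c. finite A \<and> (\<forall>\<alpha>\<in>A. \<forall>i. i \<notin> J \<longrightarrow> \<alpha> i = 0) \<and>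
      a = (\<Sum>\<alpha>\<in>A. of_rat (c \<alpha>) * mon x J \<alpha>))"

inductive_set PV :: "(nat \<Rightarrow> 'a::field_char_0) \<Rightarrow> nat set \<Rightarrow> 'a set" for x J where
  PV_const: "of_rat q \<in> PV x J"
| PV_var: "i \<in> J \<Longrightarrow> x i \<in> PV x J"
| PV_add: "a \<in> PV x J \<Longrightarrow> b \<in> PV x J \<Longrightarrow> a + b \<in> PV x J"
| PV_mult: "a \<in> PV x J \<Longrightarrow> b \<in> PV x J \<Longrightarrow> a * b \<in> PV x J"

lemma PV_0: "0 \<in> PV x J" using PV_const[of 0] by simp
lemma PV_1: "1 \<in> PV x J" using PV_const[of 1] by simp
lemma PV_neg: "a \<in> PV x J \<Longrightarrow> - a \<in> PV x J"
  using PV_mult[OF PV_const[of "-1"]] by simp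
lemma PV_diff: "a \<in> PV x J \<Longrightarrow> b \<in> PV x J \<Longrightarrow> a - b \<in> PV x J"
  unfolding diff_conv_add_uminus by (rule PV_add, assumption, rule PV_neg)
lemma PV_sum: "finite S \<Longrightarrow> (\<And>i. i \<in> S \<Longrightarrow> f i \<in> PV x J) \<Longrightarrow> sum f S \<in> PV x J"
  by (induction S rule: finite_induct) (auto intro: PV_0 PV_add)
lemma PV_prod: "finite S \<Longrightarrow> (\<And>i. i \<in> S \<Longrightarrow> f i \<in> PV x J) \<Longrightarrow> prod f S \<in> PV x J"
  by (induction S rule: finite_induct) (auto intro: PV_1 PV_mult)
lemma PV_mono: "a \<in> PV x J \<Longrightarrow> J \<subseteq> I \<Longrightarrow> a \<in> PV x I"
  by (induction rule: PV.induct) (auto intro: PV.intros)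

lemma mon_add: "mon x J (\<lambda>i. \<alpha> i + \<beta> i) = mon x J \<alpha> * mon x J \<beta>"
  unfolding mon_def by (simp add: power_add prod.distrib)

lemma PV_expl:
  assumes "finite J" shows "a \<in> PV x J \<Longrightarrow> expl x J a"
proof (induction rule: PV.induct)
  case (PV_const q)
  show ?case unfolding expl_def
    by (rule exI[of _ "{\<lambda>_. 0}"], rule exI[of _ "\<lambda>_. q"]) (simp add: mon_def)
next
  case (PV_var i)
  have "mon x J (\<lambda>l. if l = i then 1 else 0) = (\<Prod>l\<in>J. if l = i then x l else 1)"
    unfolding mon_def by (rule prod.cong) auto
  also have "\<dots> = x i" using PV_var assms by (simp add: prod.delta)
  finally show ?case unfolding expl_def
    by (intro exI[of _ "{\<lambda>l. if l = i then 1 else 0}"] exI[of _ "\<lambda>_. 1"]) (use PV_var in auto)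
next
  case (PV_add a b)
  from PV_add.IH obtain A c B d where
    A: "finite A" "\<forall>\<alpha>\<in>A. \<forall>i. i \<notin> J \<longrightarrow> \<alpha> i = 0" "a = (\<Sum>\<alpha>\<in>A. of_rat (c \<alpha>) * mon x J \<alpha>)" and
    B: "finite B" "\<forall>\<alpha>\<in>B. \<forall>i. i \<notin> J \<longrightarrow> \<alpha> i = 0" "b = (\<Sum>\<alpha>\<in>B. of_rat (d \<alpha>) * mon x J \<alpha>)"
    unfolding expl_def by blast
  define c' where "c' \<alpha> = (if \<alpha> \<in> A then c \<alpha> else 0) + (if \<alpha> \<in> B then d \<alpha> else 0)" for \<alpha>
  have "(\<Sum>\<alpha>\<in>A \<union> B. of_rat (c' \<alpha>) * mon x J \<alpha>) =
      (\<Sum>\<alpha>\<in>A \<union> B. of_rat (if \<alpha> \<in> A then c \<alpha> else 0) * mon x J \<alpha>) +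
      (\<Sum>\<alpha>\<in>A \<union> B. of_rat (if \<alpha> \<in> B then d \<alpha> else 0) * mon x J \<alpha>)"
    unfolding c'_def by (simp add: of_rat_add distrib_right sum.distrib)
  also have "(\<Sum>\<alpha>\<in>A \<union> B. of_rat (if \<alpha> \<in> A then c \<alpha> else 0) * mon x J \<alpha>) = a"
    unfolding A(3) by (rule sum.mono_neutral_cong_right) (use A B in auto)
  also have "(\<Sum>\<alpha>\<in>A \<union> B. of_rat (if \<alpha> \<in> B then d \<alpha> else 0) * mon x J \<alpha>) = b"
    unfolding B(3) by (rule sum.mono_neutral_cong_right) (use A B in auto)
  finally show ?case unfolding expl_def
    by (intro exI[of _ "A \<union> B"] exI[of _ c']) (use A B in auto)
next
  case (PV_mult a b)
  from PV_mult.IH obtain A c B d where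
    A: "finite A" "\<forall>\<alpha>\<in>A. \<forall>i. i \<notin> J \<longrightarrow> \<alpha> i = 0" "a = (\<Sum>\<alpha>\<in>A. of_rat (c \<alpha>) * mon x J \<alpha>)" and
    B: "finite B" "\<forall>\<alpha>\<in>B. \<forall>i. i \<notin> J \<longrightarrow> \<alpha> i = 0" "b = (\<Sum>\<alpha>\<in>B. of_rat (d \<alpha>) * mon x J \<alpha>)"
    unfolding expl_def by blast
  define g where "g p = (\<lambda>i. fst p i + snd p i)" for p :: "(nat \<Rightarrow> nat) \<times> (nat \<Rightarrow> nat)"
  define h where "h p = c (fst p) * d (snd p)" for p
  define f where "f p = of_rat (h p) * mon x J (g p)" for p
  define c' where "c' \<gamma> = (\<Sum>p\<in>{p. p \<in> A \<times> B \<and> g p = \<gamma>}. h p)" for \<gamma>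
  have "a * b = (\<Sum>\<alpha>\<in>A. \<Sum>\<beta>\<in>B. of_rat (c \<alpha>) * mon x J \<alpha> * (of_rat (d \<beta>) * mon x J \<beta>))"
    unfolding A(3) B(3) by (rule sum_product)
  also have "\<dots> = (\<Sum>\<alpha>\<in>A. \<Sum>\<beta>\<in>B. f (\<alpha>, \<beta>))"
    unfolding f_def h_def g_def by (simp add: mon_add of_rat_mult mult_ac)
  also have "\<dots> = (\<Sum>p\<in>A \<times> B. f p)"
    by (simp add: sum.cartesian_product)
  also have "\<dots> = (\<Sum>\<gamma>\<in>g ` (A \<times> B). \<Sum>p\<in>{p. p \<in> A \<times> B \<and> g p = \<gamma>}. f p)"
    by (rule sum.group[symmetric]) (use A B in auto)
  also have "\<dots> = (\<Sum>\<gamma>\<in>g ` (A \<times> B). of_rat (c' \<gamma>) * mon x J \<gamma>)"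
    unfolding c'_def f_def of_rat_sum sum_distrib_right by (rule sum.cong) auto
  finally show ?case unfolding expl_def
    by (intro exI[of _ "g ` (A \<times> B)"] exI[of _ c']) (use A B in \<open>auto simp: g_def\<close>)
qed

lemma mon_upd:
  assumes "finite I" "j \<in> I"
  shows "mon x I (\<alpha>(j := k)) = mon x (I - {j}) \<alpha> * x j ^ k"
proof -
  have "mon x I (\<alpha>(j := k)) = x j ^ k * (\<Prod>i\<in>I - {j}. x i ^ (\<alpha>(j := k)) i)"
    unfolding mon_def using assms by (simp add: prod.remove)
  also have "(\<Prod>i\<in>I - {j}. x i ^ (\<alpha>(j := k)) i) = mon x (I - {j}) \<alpha>"
    unfolding mon_def by (rule prod.cong) auto
  finally show ?thesis by (simp only: mult.commute)
qed

lemma LemA: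
  fixes x :: "nat \<Rightarrow> 'a::field_char_0"
  assumes fin: "finite I" and jI: "j \<in> I" and ind: "alg_indep_over_Q x I"
    and coeffs: "\<And>k. coeff p k \<in> PV x (I - {j})" and root: "poly p (x j) = 0"
  shows "p = 0"
proof -
  define J where "J = I - {j}"
  have finJ: "finite J" using fin by (simp add: J_def)
  have "\<forall>k. \<exists>Ac. finite (fst Ac) \<and> (\<forall>\<alpha>\<in>fst Ac. \<forall>i. i \<notin> J \<longrightarrow> \<alpha> i = 0) \<and>
      coeff p k = (\<Sum>\<alpha>\<in>fst Ac. of_rat (snd Ac \<alpha>) * mon x J \<alpha>)"
    using PV_expl[OF finJ coeffs[folded J_def]] unfolding expl_def by force
  then obtain Ac where Ac: "\<And>k. finite (fst (Ac k))" "\<And>k. \<forall>\<alpha>\<in>fst (Ac k). \<forall>i. i \<notin> J \<longrightarrow> \<alpha> i = 0"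
     "\<And>k. coeff p k = (\<Sum>\<alpha>\<in>fst (Ac k). of_rat (snd (Ac k) \<alpha>) * mon x J \<alpha>)"
    by metis
  define A where "A k = fst (Ac k)" for k
  define c where "c k = snd (Ac k)" for k
  have A: "finite (A k)" "\<And>\<alpha> i. \<alpha> \<in> A k \<Longrightarrow> i \<notin> J \<Longrightarrow> \<alpha> i = 0"
     "coeff p k = (\<Sum>\<alpha>\<in>A k. of_rat (c k \<alpha>) * mon x J \<alpha>)" for k
    using Ac unfolding A_def c_def by auto
  have jJ: "j \<notin> J" by (simp add: J_def)
  define N where "N = degree p"
  define S where "S = Sigma {..N} A"
  define h where "h q = (snd q) (j := fst q)" for q :: "nat \<times> (nat \<Rightarrow> nat)"
  define ct where "ct \<beta> = c (\<beta> j) (\<beta>(j := 0))" for \<beta>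
  have finS: "finite S" unfolding S_def using A(1) by auto
  have injh: "inj_on h S"
  proof (rule inj_onI)
    fix q q' assume q: "q \<in> S" "q' \<in> S" "h q = h q'"
    obtain k \<alpha> k' \<alpha>' where qq: "q = (k, \<alpha>)" "q' = (k', \<alpha>')" by fastforce
    have "\<alpha> j = 0" "\<alpha>' j = 0" using q qq A(2) jJ unfolding S_def by auto
    moreover have "k = k'" using q(3) unfolding qq h_def by (metis fun_upd_same snd_conv fst_conv)
    moreover have "\<alpha>(j := k) = \<alpha>'(j := k')" using q(3) unfolding qq h_def by simp
    ultimately have "\<alpha> = \<alpha>'" by (metis fun_upd_triv fun_upd_upd)
    with \<open>k = k'\<close> show "q = q'" using qq by simp
  qed
  have key: "(\<Sum>\<beta>\<in>h ` S. of_rat (ct \<beta>) * (\<Prod>i\<in>I. x i ^ \<beta> i)) = 0"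
  proof -
    have "(\<Sum>\<beta>\<in>h ` S. of_rat (ct \<beta>) * (\<Prod>i\<in>I. x i ^ \<beta> i)) =
        (\<Sum>q\<in>S. of_rat (ct (h q)) * mon x I (h q))"
      unfolding mon_def by (rule sum.reindex[OF injh, unfolded comp_def])
    also have "\<dots> = (\<Sum>q\<in>S. of_rat (c (fst q) (snd q)) * (mon x J (snd q) * x j ^ fst q))"
    proof (rule sum.cong[OF refl])
      fix q assume "q \<in> S"
      then obtain k \<alpha> where qq: "q = (k, \<alpha>)" "\<alpha> \<in> A k" unfolding S_def by auto
      have "\<alpha> j = 0" using qq A(2) jJ by auto
      hence "\<alpha>(j := 0) = \<alpha>" by auto
      hence "ct (h q) = c k \<alpha>" unfolding qq h_def ct_def by simp
      moreover have "mon x I (h q) = mon x J \<alpha> * x j ^ k"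
        unfolding qq h_def J_def using mon_upd[OF fin jI, of x \<alpha> k] by simp
      ultimately show "of_rat (ct (h q)) * mon x I (h q) = of_rat (c (fst q) (snd q)) * (mon x J (snd q) * x j ^ fst q)"
        unfolding qq by simp
    qed
    also have "\<dots> = (\<Sum>k\<le>N. \<Sum>\<alpha>\<in>A k. of_rat (c k \<alpha>) * (mon x J \<alpha> * x j ^ k))"
      unfolding S_def using sum.Sigma[of "{..N}" A "\<lambda>k \<alpha>. of_rat (c k \<alpha>) * (mon x J \<alpha> * x j ^ k)", symmetric] A(1)
      by (simp add: split_beta)
    also have "\<dots> = (\<Sum>k\<le>N. coeff p k * x j ^ k)"
      unfolding A(3) sum_distrib_right by (simp add: mult_ac)
    also have "\<dots> = 0" using root unfolding poly_altdef N_def by simp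
    finally show ?thesis .
  qed
  have supp: "\<forall>\<beta>\<in>h ` S. \<forall>i. i \<notin> I \<longrightarrow> \<beta> i = 0"
    using A(2) jI unfolding S_def h_def J_def by auto
  from ind have "finite (h ` S) \<longrightarrow> (\<forall>\<beta>\<in>h ` S. \<forall>i. i \<notin> I \<longrightarrow> \<beta> i = 0) \<longrightarrow>
      (\<Sum>\<beta>\<in>h ` S. of_rat (ct \<beta>) * (\<Prod>i\<in>I. x i ^ \<beta> i)) = 0 \<longrightarrow> (\<forall>\<beta>\<in>h ` S. ct \<beta> = 0)"
    unfolding alg_indep_over_Q_def by blast
  hence "\<forall>\<beta>\<in>h ` S. ct \<beta> = 0" using finite_imageI[OF finS] supp key by blast
  hence zero: "c k \<alpha> = 0" if "k \<le> N" "\<alpha> \<in> A k" for k \<alpha>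
  proof -
    have "\<alpha> j = 0" using that A(2) jJ by auto
    hence "ct (h (k, \<alpha>)) = c k \<alpha>" unfolding ct_def h_def by (simp add: fun_upd_idem)
    moreover have "h (k, \<alpha>) \<in> h ` S" using that unfolding S_def by auto
    ultimately show ?thesis using \<open>\<forall>\<beta>\<in>h ` S. ct \<beta> = 0\<close> by auto
  qed
  have "coeff p k = 0" for k
  proof (cases "k \<le> N")
    case True thus ?thesis unfolding A(3) using zero by simp
  next
    case False thus ?thesis unfolding N_def by (simp add: coeff_eq_0)
  qed
  thus "p = 0" by (simp add: poly_eq_iff)
qed

lemma PV_poly:
  assumes "j \<in> I"
  shows "a \<in> PV x I \<Longrightarrow> \<exists>p. (\<forall>k. coeff p k \<in> PV x (I - {j})) \<and> a = poly p (x j)"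
proof (induction rule: PV.induct)
  case (PV_const q)
  show ?case by (rule exI[of _ "[:of_rat q:]"]) (auto simp: coeff_pCons PV_0 PV.PV_const split: nat.split)
next
  case (PV_var i)
  show ?case
  proof (cases "i = j")
    case True
    show ?thesis by (rule exI[of _ "[:0,1:]"]) (auto simp: True coeff_pCons PV_0 PV_1 split: nat.split)
  next
    case False
    show ?thesis by (rule exI[of _ "[:x i:]"])
      (use False PV_var in \<open>auto simp: coeff_pCons PV_0 intro: PV.PV_var split: nat.split\<close>)
  qed
next
  case (PV_add a b)
  then obtain p q where "\<forall>k. coeff p k \<in> PV x (I - {j})" "a = poly p (x j)"
    "\<forall>k. coeff q k \<in> PV x (I - {j})" "b = poly q (x j)" by blast
  thus ?case by (intro exI[of _ "p + q"]) (auto intro: PV.PV_add)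
next
  case (PV_mult a b)
  then obtain p q where "\<forall>k. coeff p k \<in> PV x (I - {j})" "a = poly p (x j)"
    "\<forall>k. coeff q k \<in> PV x (I - {j})" "b = poly q (x j)" by blast
  thus ?case by (intro exI[of _ "p * q"]) (auto simp: coeff_mult intro!: PV_sum PV.PV_mult)
qed

lemma PVc_add: "(\<And>k. coeff p k \<in> PV x J) \<Longrightarrow> (\<And>k. coeff q k \<in> PV x J) \<Longrightarrow> coeff (p + q) k \<in> PV x J"
  by (simp add: PV_add)
lemma PVc_diff: "(\<And>k. coeff p k \<in> PV x J) \<Longrightarrow> (\<And>k. coeff q k \<in> PV x J) \<Longrightarrow> coeff (p - q) k \<in> PV x J"
  by (simp add: PV_diff)
lemma PVc_mult: "(\<And>k. coeff p k \<in> PV x J) \<Longrightarrow> (\<And>k. coeff q k \<in> PV x J) \<Longrightarrow> coeff (p * q) k \<in> PV x J"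
  by (auto simp: coeff_mult intro!: PV_sum PV_mult)
lemma PVc_const: "c \<in> PV x J \<Longrightarrow> coeff [:c:] k \<in> PV x J"
  by (auto simp: coeff_pCons PV_0 split: nat.split)
lemma PVc_quad: "coeff [:1, 0, -1:] k \<in> PV x J"
  by (auto simp: coeff_pCons PV_0 PV_1 PV_neg split: nat.split)

lemma one_minus_sq_nz:
  fixes x :: "nat \<Rightarrow> 'a::field_char_0"
  assumes fin: "finite I" and iI: "i \<in> I" and ind: "alg_indep_over_Q x I"
  shows "1 - x i ^ 2 \<noteq> 0"
proof
  assume h: "1 - x i ^ 2 = 0"
  have "[:1, 0, -1:] = (0 :: 'a poly)"
    by (rule LemA[OF fin iI ind PVc_quad]) (use h in \<open>simp add: power2_eq_square\<close>)
  thus False by simp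
qed

lemma x_nz:
  fixes x :: "nat \<Rightarrow> 'a::field_char_0"
  assumes fin: "finite I" and iI: "i \<in> I" and ind: "alg_indep_over_Q x I"
  shows "x i \<noteq> 0"
proof
  assume h: "x i = 0"
  have "[:0, 1:] = (0 :: 'a poly)"
    by (rule LemA[OF fin iI ind]) (use h in \<open>auto simp: coeff_pCons PV_0 PV_1 split: nat.split\<close>)
  thus False by simp
qed

lemma order_quad: "order (1::'a::field_char_0) [:1, 0, -1:] = 1"
proof -
  have e: "[:1, 0, -1:] = [:1, 1:] * [:1, -1::'a:]" by simp
  have "order 1 [:1, 1::'a:] = 0" by (rule order_0I) simp
  moreover have "order 1 [:-1, 1::'a:] = 1" using order_power_n_n[of "1::'a" 1] by simp
  moreover have "[:1, -1::'a:] = - [:-1, 1:]" by simp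
  ultimately have "order 1 [:1, 1::'a:] = 0" "order 1 [:1, -1::'a:] = 1" by (metis order_uminus)+
  thus ?thesis unfolding e by (subst order_mult) auto
qed

lemma nonsq_base:
  fixes x :: "nat \<Rightarrow> 'a::field_char_0"
  assumes fin: "finite I" and ind: "alg_indep_over_Q x I" and TI: "T \<subseteq> I" and jT: "j \<in> T"
    and a: "a \<in> PV x I" and b: "b \<in> PV x I" and bnz: "b \<noteq> 0"
    and eq: "a ^ 2 = (\<Prod>i\<in>T. 1 - x i ^ 2) * b ^ 2"
  shows False
proof -
  have jI: "j \<in> I" using TI jT by auto
  obtain pa where pa: "\<And>k. coeff pa k \<in> PV x (I - {j})" "a = poly pa (x j)"
    using PV_poly[OF jI a] by blast
  obtain pb where pb: "\<And>k. coeff pb k \<in> PV x (I - {j})" "b = poly pb (x j)"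
    using PV_poly[OF jI b] by blast
  define c where "c = (\<Prod>i\<in>T - {j}. 1 - x i ^ 2)"
  have finT: "finite T" using fin TI finite_subset by auto
  have c: "c \<in> PV x (I - {j})" unfolding c_def
    by (rule PV_prod) (use finT TI in \<open>auto intro!: PV_diff PV_1 PV_mult PV_var simp: power2_eq_square\<close>)
  have cnz: "c \<noteq> 0" unfolding c_def using one_minus_sq_nz[OF fin _ ind] finT TI
    by (subst prod_zero_iff) auto
  define pD where "pD = [:1, 0, -1:] * [:c:]"
  have pDc: "coeff pD k \<in> PV x (I - {j})" for k
    unfolding pD_def by (rule PVc_mult[OF PVc_quad PVc_const[OF c]])
  have "(\<Prod>i\<in>T. 1 - x i ^ 2) = (1 - x j ^ 2) * c" unfolding c_def using finT jT by (simp add: prod.remove algebra_simps)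
  hence pDv: "poly pD (x j) = (\<Prod>i\<in>T. 1 - x i ^ 2)" unfolding pD_def by (simp add: power2_eq_square algebra_simps)
  define q where "q = pa ^ 2 - pD * pb ^ 2"
  have qc: "coeff q k \<in> PV x (I - {j})" for k
    unfolding q_def power2_eq_square
    by (intro PVc_diff PVc_mult pa pb pDc)
  have "poly q (x j) = 0" unfolding q_def using eq pa(2) pb(2) pDv by simp
  hence "q = 0" using LemA[OF fin jI ind qc] by blast
  hence eqp: "pa ^ 2 = pD * pb ^ 2" unfolding q_def by simp
  have pbnz: "pb \<noteq> 0" using bnz pb(2) by auto
  have pDnz: "pD \<noteq> 0" unfolding pD_def using cnz by simp
  have rnz: "pD * pb ^ 2 \<noteq> 0" using pbnz pDnz by simp
  hence panz: "pa \<noteq> 0" using eqp by auto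
  have "order 1 (pa ^ 2) = 2 * order 1 pa"
    using panz by (simp add: power2_eq_square order_mult)
  moreover have "order 1 (pD * pb ^ 2) = 1 + 2 * order 1 pb"
  proof -
    have "order 1 pD = 1" unfolding pD_def using cnz
      by (subst order_mult) (auto simp: order_quad intro!: order_0I)
    thus ?thesis using rnz pDnz pbnz by (simp add: order_mult power2_eq_square)
  qed
  ultimately show False using arg_cong[OF eqp, of "order 1"] by presburger
qed



abbreviation RR where "RR \<equiv> (ring_of_type_algebra :: 'a::field ring)"

lemma RR_carrier[simp]: "carrier (RR::'a::field ring) = UNIV"
  by (simp add: ring_of_type_algebra_def)
lemma RR_add[simp]: "a \<oplus>\<^bsub>(RR::'a::field ring)\<^esub> b = a + b"
  by (simp add: ring_of_type_algebra_def)
lemma RR_mult[simp]: "a \<otimes>\<^bsub>(RR::'a::field ring)\<^esub> b = a * b"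
  by (simp add: ring_of_type_algebra_def)
lemma RR_zero[simp]: "\<zero>\<^bsub>(RR::'a::field ring)\<^esub> = 0"
  by (simp add: ring_of_type_algebra_def)
lemma RR_one[simp]: "\<one>\<^bsub>(RR::'a::field ring)\<^esub> = 1"
  by (simp add: ring_of_type_algebra_def)
lemma RR_ainv[simp]: "\<ominus>\<^bsub>(RR::'a::field ring)\<^esub> a = - a"
proof -
  interpret field "RR::'a ring" by (rule field_from_type_algebra)
  have "a \<oplus>\<^bsub>RR\<^esub> \<ominus>\<^bsub>RR\<^esub> a = \<zero>\<^bsub>RR\<^esub>" by (rule r_neg) simp
  hence "a + \<ominus>\<^bsub>RR\<^esub> a = 0" by simp
  thus ?thesis by (simp add: add_eq_0_iff)
qed
lemma RR_inv: "a \<noteq> 0 \<Longrightarrow> inv\<^bsub>(RR::'a::field ring)\<^esub> a = inverse a"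
proof -
  assume a: "a \<noteq> 0"
  interpret field "RR::'a ring" by (rule field_from_type_algebra)
  have "a \<in> Units RR" using a by (simp add: field_Units)
  hence "a \<otimes>\<^bsub>RR\<^esub> inv\<^bsub>RR\<^esub> a = \<one>\<^bsub>RR\<^esub>" by (rule Units_r_inv)
  hence "a * inv\<^bsub>RR\<^esub> a = 1" by simp
  thus ?thesis using a by (metis inverse_unique)
qed
lemma RR_pow[simp]: "a [^]\<^bsub>(RR::'a::field ring)\<^esub> (k::nat) = a ^ k"
proof -
  interpret field "RR::'a ring" by (rule field_from_type_algebra)
  show ?thesis by (induction k) (simp_all add: mult.commute)
qed

lemma K_RF:
  fixes x :: "nat \<Rightarrow> 'a::field_char_0"
  assumes "h \<in> generate_field RR (x ` I)"
  shows "\<exists>a b. a \<in> PV x I \<and> b \<in> PV x I \<and> b \<noteq> 0 \<and> h = a / b"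
  using assms
proof (induction rule: generate_field.induct)
  case one
  show ?case by (rule exI[of _ 1], rule exI[of _ 1]) (simp add: PV_1)
next
  case (incl h)
  then obtain i where "i \<in> I" "h = x i" by auto
  thus ?case by (intro exI[of _ "x i"] exI[of _ 1]) (auto simp: PV_1 intro: PV_var)
next
  case (a_inv h)
  then obtain a b where "a \<in> PV x I" "b \<in> PV x I" "b \<noteq> 0" "h = a / b" by blast
  thus ?case by (intro exI[of _ "- a"] exI[of _ b]) (auto intro: PV_neg)
next
  case (m_inv h)
  then obtain a b where ab: "a \<in> PV x I" "b \<in> PV x I" "b \<noteq> 0" "h = a / b" by blast
  have "h \<noteq> 0" using m_inv by simp
  hence "a \<noteq> 0" using ab by auto
  thus ?case using ab \<open>h \<noteq> 0\<close> by (intro exI[of _ b] exI[of _ a]) (auto simp: RR_inv)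
next
  case (eng_add h1 h2)
  then obtain a b c d where ab: "a \<in> PV x I" "b \<in> PV x I" "b \<noteq> 0" "h1 = a / b"
    and cd: "c \<in> PV x I" "d \<in> PV x I" "d \<noteq> 0" "h2 = c / d" by blast
  thus ?case by (intro exI[of _ "a * d + c * b"] exI[of _ "b * d"])
      (auto intro!: PV_add PV_mult simp: field_simps)
next
  case (eng_mult h1 h2)
  then obtain a b c d where ab: "a \<in> PV x I" "b \<in> PV x I" "b \<noteq> 0" "h1 = a / b"
    and cd: "c \<in> PV x I" "d \<in> PV x I" "d \<noteq> 0" "h2 = c / d" by blast
  thus ?case by (intro exI[of _ "a * c"] exI[of _ "b * d"])
      (auto intro!: PV_add PV_mult simp: field_simps)
qed

lemma nonsq_K:
  fixes x :: "nat \<Rightarrow> 'a::field_char_0"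
  assumes fin: "finite I" and ind: "alg_indep_over_Q x I" and TI: "T \<subseteq> I" and Tne: "T \<noteq> {}"
    and u: "u \<in> generate_field RR (x ` I)"
  shows "u ^ 2 \<noteq> (\<Prod>i\<in>T. 1 - x i ^ 2)"
proof
  assume eq: "u ^ 2 = (\<Prod>i\<in>T. 1 - x i ^ 2)"
  obtain a b where ab: "a \<in> PV x I" "b \<in> PV x I" "b \<noteq> 0" "u = a / b"
    using K_RF[OF u] by blast
  obtain j where "j \<in> T" using Tne by auto
  have "a ^ 2 = (\<Prod>i\<in>T. 1 - x i ^ 2) * b ^ 2"
    using eq ab(3,4) by (simp add: field_simps power2_eq_square)
  thus False using nonsq_base[OF fin ind TI \<open>j \<in> T\<close> ab(1,2,3)] by blast
qed



definition fieldset :: "'a::field set \<Rightarrow> bool" where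
  "fieldset F \<longleftrightarrow> 0 \<in> F \<and> 1 \<in> F \<and> (\<forall>a\<in>F. \<forall>b\<in>F. a + b \<in> F \<and> a * b \<in> F) \<and>
     (\<forall>a\<in>F. - a \<in> F) \<and> (\<forall>a\<in>F. inverse a \<in> F)"

lemma fsD:
  assumes "fieldset F"
  shows fs0: "0 \<in> F" and fs1: "1 \<in> F"
    and fs_add: "a \<in> F \<Longrightarrow> b \<in> F \<Longrightarrow> a + b \<in> F"
    and fs_mult: "a \<in> F \<Longrightarrow> b \<in> F \<Longrightarrow> a * b \<in> F"
    and fs_neg: "a \<in> F \<Longrightarrow> - a \<in> F"
    and fs_inv: "a \<in> F \<Longrightarrow> inverse a \<in> F"
  using assms unfolding fieldset_def by auto

lemma fs_diff: "fieldset F \<Longrightarrow> a \<in> F \<Longrightarrow> b \<in> F \<Longrightarrow> a - b \<in> F"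
  using fs_add[of F a "- b"] fs_neg[of F b] by simp
lemma fs_div: "fieldset F \<Longrightarrow> a \<in> F \<Longrightarrow> b \<in> F \<Longrightarrow> a / b \<in> F"
  using fs_mult[of F a "inverse b"] fs_inv[of F b] by (simp add: divide_inverse)
lemma fs_pow: "fieldset F \<Longrightarrow> a \<in> F \<Longrightarrow> a ^ k \<in> F"
  by (induction k) (auto intro: fs1 fs_mult)
lemma fs_sum: assumes "fieldset F" shows "finite S \<Longrightarrow> (\<And>i. i \<in> S \<Longrightarrow> f i \<in> F) \<Longrightarrow> sum f S \<in> F"
  by (induction S rule: finite_induct) (auto intro: fs0[OF assms] fs_add[OF assms])
lemma fs_prod: assumes "fieldset F" shows "finite S \<Longrightarrow> (\<And>i. i \<in> S \<Longrightarrow> f i \<in> F) \<Longrightarrow> prod f S \<in> F"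
  by (induction S rule: finite_induct) (auto intro: fs1[OF assms] fs_mult[OF assms])

primrec Lt :: "'a::field set \<Rightarrow> (nat \<Rightarrow> 'a) \<Rightarrow> nat \<Rightarrow> 'a set" where
  "Lt K y 0 = K"
| "Lt K y (Suc k) = {a + b * y (Suc k) | a b. a \<in> Lt K y k \<and> b \<in> Lt K y k}"

definition DD :: "(nat \<Rightarrow> 'a::field) \<Rightarrow> nat set \<Rightarrow> 'a" where
  "DD x T = (\<Prod>i\<in>T. 1 - x i ^ 2)"

definition yS :: "(nat \<Rightarrow> 'a::field) \<Rightarrow> nat set \<Rightarrow> 'a" where
  "yS y S = (\<Prod>j\<in>S. y j)"

lemma Pow_split_sum:
  "(\<Sum>S\<in>Pow {1..Suc k}. f S) = (\<Sum>S\<in>Pow {1..k}. f S) + (\<Sum>S\<in>Pow {1..k}. f (insert (Suc k) S))"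
proof -
  have e: "{1..Suc k} = insert (Suc k) {1..k}" by auto
  have inj: "inj_on (insert (Suc k)) (Pow {1..k})"
    by (rule inj_onI) (metis Diff_insert_absorb PowD atLeastAtMost_iff not_less_eq_eq order_refl subsetD)
  have disj: "Pow {1..k} \<inter> insert (Suc k) ` Pow {1..k} = {}" by auto
  show ?thesis unfolding e Pow_insert
    by (subst sum.union_disjoint, simp, simp, rule disj, subst sum.reindex[OF inj], simp add: comp_def)
qed

locale tow =
  fixes x y :: "nat \<Rightarrow> 'a::field_char_0" and n :: nat and K :: "'a set"
  assumes fsK: "fieldset K"
    and Kx: "\<And>i. i \<in> {1..n} \<Longrightarrow> x i \<in> K"
    and NS0: "\<And>T u. T \<subseteq> {1..n} \<Longrightarrow> T \<noteq> {} \<Longrightarrow> u \<in> K \<Longrightarrow> u ^ 2 \<noteq> DD x T"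
    and yy: "\<And>j. j \<in> {1..n} \<Longrightarrow> y j ^ 2 = 1 - x j ^ 2"
    and dnz: "\<And>j. j \<in> {1..n} \<Longrightarrow> 1 - x j ^ 2 \<noteq> 0"
begin

abbreviation L where "L \<equiv> Lt K y"

lemma zero_L: "0 \<in> L k"
proof (induction k)
  case 0 thus ?case using fs0[OF fsK] by simp
next
  case (Suc k)
  have "(0::'a) = 0 + 0 * y (Suc k)" by simp
  thus ?case using Suc by (simp only: Lt.simps) blast
qed

lemma L_mono1: "a \<in> L k \<Longrightarrow> a \<in> L (Suc k)"
proof -
  assume "a \<in> L k"
  moreover have "a = a + 0 * y (Suc k)" by simp
  ultimately show ?thesis using zero_L[of k] by (simp only: Lt.simps) blast
qed

lemma L_mono: "k \<le> k' \<Longrightarrow> L k \<subseteq> L k'"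
proof (induction k' rule: dec_induct)
  case base show ?case by simp
next
  case (step m) thus ?case using L_mono1 by blast
qed

lemma K_L: "K \<subseteq> L k"
  using L_mono[of 0 k] by simp

lemma DD_K: "T \<subseteq> {1..n} \<Longrightarrow> DD x T \<in> K"
  unfolding DD_def
  by (rule fs_prod[OF fsK]) (auto intro!: fs_diff[OF fsK] fs1[OF fsK] fs_pow[OF fsK] Kx intro: finite_subset)

lemma DD_single: "DD x {s} = 1 - x s ^ 2" by (simp add: DD_def)

definition NSk where
  "NSk k \<longleftrightarrow> (\<forall>T u. T \<subseteq> {1..n} \<longrightarrow> (\<exists>j\<in>T. k < j) \<longrightarrow> u \<in> L k \<longrightarrow> u ^ 2 \<noteq> DD x T)"

lemma main_ind: "k \<le> n \<Longrightarrow> fieldset (L k) \<and> NSk k"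
proof (induction k)
  case 0
  show ?case using fsK NS0 unfolding NSk_def by auto
next
  case (Suc k)
  hence IH: "fieldset (L k)" "NSk k" by auto
  define s where "s = Suc k"
  have sn: "s \<in> {1..n}" using Suc.prems by (simp add: s_def)
  define d where "d = 1 - x s ^ 2"
  have dL: "d \<in> L k" using K_L DD_K[of "{s}"] sn by (auto simp: d_def DD_single)
  have yd: "y s ^ 2 = d" using yy[OF sn] by (simp add: d_def)
  have ydd: "y s * y s = d" using yd by (simp add: power2_eq_square)
  have dnz': "d \<noteq> 0" using dnz[OF sn] by (simp add: d_def)
  have nsd: "u ^ 2 \<noteq> d" if "u \<in> L k" for u
    using IH(2) that sn unfolding NSk_def d_def s_def
    by (metis DD_single empty_subsetI insert_subset lessI singletonI)
  have memL: "u \<in> L s \<longleftrightarrow> (\<exists>a b. a \<in> L k \<and> b \<in> L k \<and> u = a + b * y s)" for u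
    by (auto simp: s_def)
  note F = IH(1)
  have fs: "fieldset (L s)"
    unfolding fieldset_def
  proof (intro conjI ballI)
    show "0 \<in> L s" by (rule zero_L)
    show "1 \<in> L s" unfolding memL by (rule exI[of _ 1], rule exI[of _ 0]) (simp add: fs1[OF F] fs0[OF F])
  next
    fix u v assume u: "u \<in> L s" and v: "v \<in> L s"
    then obtain a b a' b' where ab: "a \<in> L k" "b \<in> L k" "u = a + b * y s"
      and ab': "a' \<in> L k" "b' \<in> L k" "v = a' + b' * y s" unfolding memL by blast
    show "u + v \<in> L s" unfolding memL
      by (rule exI[of _ "a + a'"], rule exI[of _ "b + b'"])
        (auto simp: ab ab' fs_add[OF F] algebra_simps)
    have "u * v = (a * a' + b * b' * d) + (a * b' + b * a') * y s"
      unfolding ab ab' by (simp add: algebra_simps ydd[symmetric])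
    thus "u * v \<in> L s" unfolding memL
      by (intro exI[of _ "a * a' + b * b' * d"] exI[of _ "a * b' + b * a'"])
        (auto simp: ab ab' dL intro!: fs_add[OF F] fs_mult[OF F])
  next
    fix u assume u: "u \<in> L s"
    then obtain a b where ab: "a \<in> L k" "b \<in> L k" "u = a + b * y s" unfolding memL by blast
    show "- u \<in> L s" unfolding memL
      by (rule exI[of _ "- a"], rule exI[of _ "- b"]) (auto simp: ab fs_neg[OF F])
    show "inverse u \<in> L s"
    proof (cases "u = 0")
      case True thus ?thesis using zero_L by simp
    next
      case False
      define N where "N = a ^ 2 - b ^ 2 * d"
      have Nnz: "N \<noteq> 0"
      proof
        assume N0: "N = 0"
        show False
        proof (cases "b = 0")
          case True
          hence "a = 0" using N0 by (simp add: N_def)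
          thus False using False True ab by simp
        next
          case False
          have "(a / b) ^ 2 = d" using N0 False by (simp add: N_def field_simps)
          moreover have "a / b \<in> L k" using ab by (simp add: fs_div[OF F])
          ultimately show False using nsd by blast
        qed
      qed
      have "u * (a / N + (- b / N) * y s) = (a ^ 2 - b ^ 2 * (y s * y s)) / N"
        unfolding ab using Nnz by (simp add: field_simps power2_eq_square)
      also have "\<dots> = 1" using Nnz by (simp add: ydd N_def)
      finally have "inverse u = a / N + (- b / N) * y s" by (rule inverse_unique)
      moreover have "N \<in> L k" unfolding N_def using ab dL
        by (intro fs_diff[OF F] fs_mult[OF F] fs_pow[OF F])
      ultimately show ?thesis unfolding memL using ab
        by (intro exI[of _ "a / N"] exI[of _ "- b / N"]) (auto intro: fs_div[OF F] fs_neg[OF F])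
    qed
  qed
  have ns: "NSk s"
    unfolding NSk_def
  proof (intro allI impI notI)
    fix T u assume T: "T \<subseteq> {1..n}" and jT: "\<exists>j\<in>T. s < j" and u: "u \<in> L s" and eq: "u ^ 2 = DD x T"
    obtain j where j: "j \<in> T" "s < j" using jT by blast
    obtain a b where ab: "a \<in> L k" "b \<in> L k" "u = a + b * y s" using u unfolding memL by blast
    have DK: "DD x T \<in> L k" using DD_K[OF T] K_L by auto
    have sq: "u ^ 2 = (a ^ 2 + b ^ 2 * d) + (2 * a * b) * y s"
      unfolding ab by (simp add: algebra_simps power2_eq_square ydd[symmetric])
    have ns_k: "v ^ 2 \<noteq> DD x T'" if "T' \<subseteq> {1..n}" "j \<in> T'" "v \<in> L k" for T' v
      using IH(2) that j unfolding NSk_def s_def by (meson Suc_lessD)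
    show False
    proof (cases "a * b = 0")
      case False
      have "y s = (DD x T - a ^ 2 - b ^ 2 * d) / (2 * a * b)"
        using False eq sq by (simp add: field_simps)
      moreover have "(DD x T - a ^ 2 - b ^ 2 * d) / (2 * a * b) \<in> L k"
        using ab DK dL fs1[OF F] fs_add[OF F fs1[OF F] fs1[OF F]]
        by (intro fs_div[OF F] fs_diff[OF F] fs_mult[OF F] fs_pow[OF F] fs_add[OF F]) auto
      ultimately show False using nsd yd by metis
    next
      case True
      show False
      proof (cases "b = 0")
        case True
        hence "a ^ 2 = DD x T" using eq ab by simp
        thus False using ns_k[OF T j(1) ab(1)] by simp
      next
        case False
        hence a0: "a = 0" using True by simp
        hence bd: "b ^ 2 * d = DD x T" using eq ab by (simp add: ydd[symmetric] power2_eq_square mult_ac)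
        have finT: "finite T" using T finite_subset by blast
        show False
        proof (cases "s \<in> T")
          case True
          have "DD x T = d * DD x (T - {s})" unfolding DD_def d_def using finT True by (simp add: prod.remove)
          hence "b ^ 2 = DD x (T - {s})" using bd dnz' by simp
          moreover have "j \<in> T - {s}" using j by auto
          ultimately show False using ns_k[of "T - {s}" b] T ab(2) by auto
        next
          case False
          have "DD x (insert s T) = d * DD x T" unfolding DD_def d_def using finT False by simp
          hence "(b * d) ^ 2 = DD x (insert s T)" using bd by (simp add: power2_eq_square algebra_simps)
          moreover have "b * d \<in> L k" using ab dL by (simp add: fs_mult[OF F])
          ultimately show False using ns_k[of "insert s T" "b * d"] T sn j by auto
        qed
      qed
    qed
  qed
  show ?case using fs ns by (simp add: s_def)
qed

lemma L_fs: "k \<le> n \<Longrightarrow> fieldset (L k)" using main_ind by blast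
lemma L_NS: "k \<le> n \<Longrightarrow> NSk k" using main_ind by blast

lemma uniq:
  assumes k: "Suc k \<le> n" and a: "a \<in> L k" and b: "b \<in> L k" and eq: "a + b * y (Suc k) = 0"
  shows "a = 0 \<and> b = 0"
proof (cases "b = 0")
  case True thus ?thesis using eq by simp
next
  case False
  have sn: "Suc k \<in> {1..n}" using k by simp
  have "y (Suc k) = - a / b" using eq False by (simp add: field_simps add_eq_0_iff)
  moreover have "- a / b \<in> L k" using L_fs[of k] k a b by (simp add: fs_div fs_neg)
  moreover have "y (Suc k) ^ 2 = DD x {Suc k}" using yy[OF sn] by (simp add: DD_single)
  moreover have H: "\<forall>T u. T \<subseteq> {1..n} \<longrightarrow> (\<exists>j\<in>T. k < j) \<longrightarrow> u \<in> L k \<longrightarrow> u ^ 2 \<noteq> DD x T"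
    using L_NS[OF Suc_leD[OF k]] unfolding NSk_def by blast
  hence "(- a / b) ^ 2 \<noteq> DD x {Suc k}"
    using spec[OF spec[OF H, of "{Suc k}"], of "- a / b"] sn \<open>- a / b \<in> L k\<close> by simp
  ultimately show ?thesis by simp
qed

lemma uniq2:
  assumes k: "Suc k \<le> n" and "a \<in> L k" "b \<in> L k" "a' \<in> L k" "b' \<in> L k"
    and eq: "a + b * y (Suc k) = a' + b' * y (Suc k)"
  shows "a = a' \<and> b = b'"
proof -
  have "(a - a') + (b - b') * y (Suc k) = 0" using eq by (simp add: algebra_simps)
  moreover have "a - a' \<in> L k" "b - b' \<in> L k" using L_fs[of k] k assms by (auto intro: fs_diff)
  ultimately have "a - a' = 0 \<and> b - b' = 0" using uniq[OF k] by blast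
  thus ?thesis by simp
qed

lemma y_L: "1 \<le> j \<Longrightarrow> j \<le> k \<Longrightarrow> y j \<in> L k"
proof -
  assume j: "1 \<le> j" "j \<le> k"
  then obtain i where i: "j = Suc i" by (cases j) auto
  have "y j = 0 + 1 * y (Suc i)" using i by simp
  moreover have "(1::'a) \<in> L i" using K_L fs1[OF fsK] by auto
  ultimately have "y j \<in> L j" using zero_L[of i] i by (simp only: Lt.simps) blast
  thus ?thesis using L_mono[OF j(2)] by auto
qed

lemma yS_L: assumes k: "k \<le> n" and S: "S \<subseteq> {1..k}" shows "yS y S \<in> L k"
proof -
  have "finite S" using S finite_subset by blast
  moreover have "y i \<in> L k" if "i \<in> S" for i
  proof -
    have "1 \<le> i" "i \<le> k" using S that by auto
    thus ?thesis by (rule y_L)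
  qed
  ultimately show ?thesis unfolding yS_def by (rule fs_prod[OF L_fs[OF k]])
qed

lemma expand:
  "k \<le> n \<Longrightarrow> u \<in> L k \<Longrightarrow> \<exists>c. (\<forall>S. c S \<in> K) \<and> u = (\<Sum>S\<in>Pow {1..k}. c S * yS y S)"
proof (induction k arbitrary: u)
  case 0
  thus ?case by (intro exI[of _ "\<lambda>_. u"]) (auto simp: yS_def)
next
  case (Suc k)
  obtain a b where ab: "a \<in> L k" "b \<in> L k" "u = a + b * y (Suc k)" using Suc.prems by auto
  obtain ca where ca: "\<forall>S. ca S \<in> K" "a = (\<Sum>S\<in>Pow {1..k}. ca S * yS y S)" using Suc ab by auto
  obtain cb where cb: "\<forall>S. cb S \<in> K" "b = (\<Sum>S\<in>Pow {1..k}. cb S * yS y S)" using Suc ab by auto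
  define c where "c S = (if Suc k \<in> S then cb (S - {Suc k}) else ca S)" for S
  have "(\<Sum>S\<in>Pow {1..Suc k}. c S * yS y S) =
      (\<Sum>S\<in>Pow {1..k}. c S * yS y S) + (\<Sum>S\<in>Pow {1..k}. c (insert (Suc k) S) * yS y (insert (Suc k) S))"
    by (rule Pow_split_sum)
  also have "(\<Sum>S\<in>Pow {1..k}. c S * yS y S) = a"
    unfolding ca(2) c_def by (rule sum.cong) auto
  also have "(\<Sum>S\<in>Pow {1..k}. c (insert (Suc k) S) * yS y (insert (Suc k) S)) = b * y (Suc k)"
    unfolding cb(2) sum_distrib_right
  proof (rule sum.cong)
    fix S assume S: "S \<in> Pow {1..k}"
    hence nS: "Suc k \<notin> S" by auto
    have fS: "finite S" using S finite_subset by auto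
    have "insert (Suc k) S - {Suc k} = S" using nS by auto
    thus "c (insert (Suc k) S) * yS y (insert (Suc k) S) = cb S * yS y S * y (Suc k)"
      unfolding c_def yS_def using nS fS by simp
  qed simp
  finally show ?case using ca cb ab by (intro exI[of _ c]) (auto simp: c_def)
qed

lemma indep:
  "k \<le> n \<Longrightarrow> (\<forall>S. c S \<in> K) \<Longrightarrow> (\<Sum>S\<in>Pow {1..k}. c S * yS y S) = 0 \<Longrightarrow> S \<subseteq> {1..k} \<Longrightarrow> c S = 0"
proof (induction k arbitrary: c S)
  case 0
  hence "S = {}" by auto
  thus ?case using 0 by (simp add: yS_def)
next
  case (Suc k)
  define A where "A = (\<Sum>S\<in>Pow {1..k}. c S * yS y S)"
  define B where "B = (\<Sum>S\<in>Pow {1..k}. c (insert (Suc k) S) * yS y S)"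
  have yins: "yS y (insert (Suc k) S) = y (Suc k) * yS y S" if "S \<in> Pow {1..k}" for S
  proof -
    have "Suc k \<notin> S" "finite S" using that finite_subset by auto
    thus ?thesis by (simp add: yS_def)
  qed
  have "(\<Sum>S\<in>Pow {1..k}. c (insert (Suc k) S) * yS y (insert (Suc k) S)) = B * y (Suc k)"
    unfolding B_def sum_distrib_right by (rule sum.cong) (simp_all add: yins mult_ac)
  hence "A + B * y (Suc k) = 0"
    using Suc.prems(3) unfolding Pow_split_sum A_def by simp
  moreover have "A \<in> L k" "B \<in> L k" unfolding A_def B_def using Suc.prems K_L
    by (auto intro!: fs_sum[OF L_fs] fs_mult[OF L_fs] yS_L)
  ultimately have AB: "A = 0" "B = 0" using uniq Suc.prems by auto
  show ?case
  proof (cases "Suc k \<in> S")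
    case True
    have "S - {Suc k} \<subseteq> {1..k}" using Suc.prems(4) by auto
    hence "c (insert (Suc k) (S - {Suc k})) = 0"
      using Suc.IH[of "\<lambda>S. c (insert (Suc k) S)" "S - {Suc k}"] Suc.prems AB(2) unfolding B_def by auto
    thus ?thesis using True by (simp add: insert_absorb)
  next
    case False
    hence "S \<subseteq> {1..k}" using Suc.prems(4) by (auto simp: le_Suc_eq)
    thus ?thesis using Suc.IH[of c S] Suc.prems AB(1) unfolding A_def by auto
  qed
qed

end



context tow
begin

primrec phi :: "(nat \<Rightarrow> 'a) \<Rightarrow> nat \<Rightarrow> 'a \<Rightarrow> 'a" where
  "phi e 0 u = u"
| "phi e (Suc k) u = (THE v. \<exists>a b. a \<in> L k \<and> b \<in> L k \<and> u = a + b * y (Suc k) \<and>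
      v = phi e k a + e (Suc k) * phi e k b * y (Suc k))"

lemma phi_Suc:
  assumes k: "Suc k \<le> n" and a: "a \<in> L k" and b: "b \<in> L k"
  shows "phi e (Suc k) (a + b * y (Suc k)) = phi e k a + e (Suc k) * phi e k b * y (Suc k)"
  unfolding phi.simps
proof (rule the_equality)
  show "\<exists>a' b'. a' \<in> L k \<and> b' \<in> L k \<and> a + b * y (Suc k) = a' + b' * y (Suc k) \<and>
      phi e k a + e (Suc k) * phi e k b * y (Suc k) = phi e k a' + e (Suc k) * phi e k b' * y (Suc k)"
    using a b by blast
next
  fix v assume "\<exists>a' b'. a' \<in> L k \<and> b' \<in> L k \<and> a + b * y (Suc k) = a' + b' * y (Suc k) \<and>
      v = phi e k a' + e (Suc k) * phi e k b' * y (Suc k)"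
  then obtain a' b' where ab': "a' \<in> L k" "b' \<in> L k" "a + b * y (Suc k) = a' + b' * y (Suc k)"
    "v = phi e k a' + e (Suc k) * phi e k b' * y (Suc k)" by blast
  with uniq2[OF k a b ab'(1,2,3)] show "v = phi e k a + e (Suc k) * phi e k b * y (Suc k)" by simp
qed

lemma hom:
  assumes pm: "\<And>j. e j = 1 \<or> e j = -1"
  shows "k \<le> n \<Longrightarrow> (\<forall>u\<in>L k. phi e k u \<in> L k) \<and> (\<forall>c\<in>K. phi e k c = c) \<and>
     (\<forall>u\<in>L k. \<forall>v\<in>L k. phi e k (u + v) = phi e k u + phi e k v \<and> phi e k (u * v) = phi e k u * phi e k v)"
proof (induction k)
  case 0 thus ?case by simp
next
  case (Suc k)
  hence kn: "k \<le> n" by simp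
  from Suc have IH1: "\<And>u. u \<in> L k \<Longrightarrow> phi e k u \<in> L k"
    and IH2: "\<And>c. c \<in> K \<Longrightarrow> phi e k c = c"
    and IH3: "\<And>u v. u \<in> L k \<Longrightarrow> v \<in> L k \<Longrightarrow> phi e k (u + v) = phi e k u + phi e k v"
    and IH4: "\<And>u v. u \<in> L k \<Longrightarrow> v \<in> L k \<Longrightarrow> phi e k (u * v) = phi e k u * phi e k v"
    by auto
  define s where "s = Suc k"
  have sn: "s \<in> {1..n}" using Suc.prems by (simp add: s_def)
  have F: "fieldset (L k)" using L_fs[OF kn] .
  have ps: "phi e s (a + b * y s) = phi e k a + e s * phi e k b * y s" if "a \<in> L k" "b \<in> L k" for a b
    unfolding s_def by (rule phi_Suc[OF Suc.prems that])
  have memL: "u \<in> L s \<longleftrightarrow> (\<exists>a b. a \<in> L k \<and> b \<in> L k \<and> u = a + b * y s)" for u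
    by (auto simp: s_def)
  have es: "e s * e s = 1" using pm[of s] by auto
  have esL: "e s \<in> L k" using pm[of s] fs1[OF F] fs_neg[OF F, of 1] by auto
  define d where "d = 1 - x s ^ 2"
  have dK: "d \<in> K" using DD_K[of "{s}"] sn by (simp add: d_def DD_single)
  have dL: "d \<in> L k" using dK K_L by auto
  have ydd: "y s * y s = d" using yy[OF sn] by (simp add: d_def power2_eq_square)
  have z: "phi e k 0 = 0" using IH2 fs0[OF fsK] by simp
  have P1: "phi e s u \<in> L s" if u: "u \<in> L s" for u
  proof -
    obtain a b where ab: "a \<in> L k" "b \<in> L k" "u = a + b * y s" using u memL by blast
    show ?thesis unfolding ab(3) ps[OF ab(1,2)] memL
      by (intro exI[of _ "phi e k a"] exI[of _ "e s * phi e k b"])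
        (auto simp: IH1 ab fs_mult[OF F] esL)
  qed
  have P2: "phi e s c = c" if c: "c \<in> K" for c
  proof -
    have "c = c + 0 * y s" by simp
    hence "phi e s c = phi e k c + e s * phi e k 0 * y s" using ps[of c 0] c K_L zero_L by auto
    thus ?thesis using IH2[OF c] z by simp
  qed
  have P34: "phi e s (u + v) = phi e s u + phi e s v \<and> phi e s (u * v) = phi e s u * phi e s v"
    if u: "u \<in> L s" and v: "v \<in> L s" for u v
  proof -
    obtain a b where ab: "a \<in> L k" "b \<in> L k" "u = a + b * y s" using u memL by blast
    obtain a' b' where ab': "a' \<in> L k" "b' \<in> L k" "v = a' + b' * y s" using v memL by blast
    have "u + v = (a + a') + (b + b') * y s" unfolding ab ab' by (simp add: algebra_simps)
    hence "phi e s (u + v) = phi e s ((a + a') + (b + b') * y s)" by simp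
    also have "\<dots> = phi e k (a + a') + e s * phi e k (b + b') * y s"
      by (rule ps) (use ab ab' fs_add[OF F] in auto)
    also have "\<dots> = phi e s u + phi e s v"
      unfolding ab(3) ab'(3) ps[OF ab(1,2)] ps[OF ab'(1,2)] IH3[OF ab(1) ab'(1)] IH3[OF ab(2) ab'(2)]
      by (simp add: algebra_simps)
    finally have add: "phi e s (u + v) = phi e s u + phi e s v" .
    have "u * v = (a * a' + b * b' * d) + (a * b' + b * a') * y s"
      unfolding ab ab' by (simp add: algebra_simps ydd[symmetric])
    moreover have m1: "a * a' + b * b' * d \<in> L k" "a * b' + b * a' \<in> L k"
      using ab ab' dL by (auto intro!: fs_add[OF F] fs_mult[OF F])
    ultimately have "phi e s (u * v) = phi e k (a * a' + b * b' * d) + e s * phi e k (a * b' + b * a') * y s"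
      using ps[OF m1] by simp
    also have "\<dots> = phi e k a * phi e k a' + phi e k b * phi e k b' * d +
        e s * (phi e k a * phi e k b' + phi e k b * phi e k a') * y s"
      using ab ab' dL dK
      by (simp add: IH3 IH4 IH2 fs_mult[OF F] fs_add[OF F])
    also have "\<dots> = (phi e k a + e s * phi e k b * y s) * (phi e k a' + e s * phi e k b' * y s)"
    proof -
      have "(phi e k a + e s * phi e k b * y s) * (phi e k a' + e s * phi e k b' * y s) =
          phi e k a * phi e k a' + (e s * e s) * (phi e k b * phi e k b') * (y s * y s) +
          e s * (phi e k a * phi e k b' + phi e k b * phi e k a') * y s"
        by (simp add: algebra_simps)
      thus ?thesis by (simp add: es ydd)
    qed
    also have "\<dots> = phi e s u * phi e s v" unfolding ab(3) ab'(3) ps[OF ab(1,2)] ps[OF ab'(1,2)] ..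
    finally show ?thesis using add by simp
  qed
  show ?case using P1 P2 P34 by (simp add: s_def)
qed

context
  fixes e :: "nat \<Rightarrow> 'a" assumes pm: "\<And>j. e j = 1 \<or> e j = -1"
begin

lemma phi_L: assumes "k \<le> n" "u \<in> L k" shows "phi e k u \<in> L k" using hom[where e=e, OF pm assms(1)] assms(2) by blast
lemma phi_K: assumes "k \<le> n" "c \<in> K" shows "phi e k c = c" using hom[where e=e, OF pm assms(1)] assms(2) by blast
lemma phi_add: assumes "k \<le> n" "u \<in> L k" "v \<in> L k" shows "phi e k (u + v) = phi e k u + phi e k v"
  using hom[where e=e, OF pm assms(1)] assms(2,3) by blast
lemma phi_mult: assumes "k \<le> n" "u \<in> L k" "v \<in> L k" shows "phi e k (u * v) = phi e k u * phi e k v"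
  using hom[where e=e, OF pm assms(1)] assms(2,3) by blast
lemma phi_0: "k \<le> n \<Longrightarrow> phi e k 0 = 0" using phi_K fs0[OF fsK] by blast
lemma phi_1: "k \<le> n \<Longrightarrow> phi e k 1 = 1" using phi_K fs1[OF fsK] by blast

lemma phi_neg: assumes k: "k \<le> n" and u: "u \<in> L k" shows "phi e k (- u) = - phi e k u"
proof -
  have "- u \<in> L k" using fs_neg[OF L_fs[OF k] u] .
  hence "phi e k (u + - u) = phi e k u + phi e k (- u)" using phi_add[OF k u] by blast
  thus ?thesis using phi_0[OF k] by (simp add: add_eq_0_iff)
qed

lemma phi_sum: assumes k: "k \<le> n"
  shows "finite S \<Longrightarrow> (\<And>i. i \<in> S \<Longrightarrow> f i \<in> L k) \<Longrightarrow> phi e k (sum f S) = (\<Sum>i\<in>S. phi e k (f i))"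
proof (induction S rule: finite_induct)
  case empty thus ?case using phi_0[OF k] by simp
next
  case (insert i S)
  have "sum f S \<in> L k" using insert by (intro fs_sum[OF L_fs[OF k]]) auto
  thus ?case using insert phi_add[OF k] by simp
qed

lemma phi_prod: assumes k: "k \<le> n"
  shows "finite S \<Longrightarrow> (\<And>i. i \<in> S \<Longrightarrow> f i \<in> L k) \<Longrightarrow> phi e k (prod f S) = (\<Prod>i\<in>S. phi e k (f i))"
proof (induction S rule: finite_induct)
  case empty thus ?case using phi_1[OF k] by simp
next
  case (insert i S)
  have "prod f S \<in> L k" using insert by (intro fs_prod[OF L_fs[OF k]]) auto
  thus ?case using insert phi_mult[OF k] by simp
qed

lemma phi_low: assumes k: "Suc k \<le> n" and u: "u \<in> L k" shows "phi e (Suc k) u = phi e k u"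
proof -
  have "phi e (Suc k) (u + 0 * y (Suc k)) = phi e k u + e (Suc k) * phi e k 0 * y (Suc k)"
    using phi_Suc[OF k u zero_L] .
  thus ?thesis using phi_0[of k] k by simp
qed

lemma phi_y: assumes j: "1 \<le> j" "j \<le> k" and k: "k \<le> n" shows "phi e k (y j) = e j * y j"
  using j(2) k
proof (induction k rule: dec_induct)
  case base
  obtain i where i: "j = Suc i" using j(1) by (cases j) auto
  have "phi e (Suc i) (0 + 1 * y (Suc i)) = phi e i 0 + e (Suc i) * phi e i 1 * y (Suc i)"
    using phi_Suc[of i 0 1] base zero_L K_L fs1[OF fsK] i by auto
  thus ?case using phi_0[of i] phi_1[of i] base i by simp
next
  case (step m)
  have "y j \<in> L m" using y_L[OF j(1)] step by simp
  thus ?case using phi_low[of m] step by simp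
qed

end

lemma EC_L:
  assumes m: "m \<le> n"
  shows "EC m x y \<in> L m"
proof -
  have F: "fieldset (L m)" using L_fs[OF m] .
  have fin: "finite {S. S \<subseteq> {1..m} \<and> even (card S)}" by simp
  show ?thesis unfolding EC_def
  proof (rule fs_sum[OF F fin])
    fix S assume S: "S \<in> {S. S \<subseteq> {1..m} \<and> even (card S)}"
    have "(-1::'a) ^ (card S div 2) \<in> L m" using fs_pow[OF F fs_neg[OF F fs1[OF F]]] by simp
    moreover have "(\<Prod>j\<in>S. y j) \<in> L m" using yS_L[OF m] S by (simp add: yS_def)
    moreover have "(\<Prod>j\<in>{1..m} - S. x j) \<in> L m"
    proof (rule fs_prod[OF F])
      fix i assume "i \<in> {1..m} - S"
      hence "x i \<in> K" using m by (auto intro: Kx)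
      thus "x i \<in> L m" using K_L by auto
    qed simp
    ultimately show "(-1) ^ (card S div 2) * (\<Prod>j\<in>S. y j) * (\<Prod>j\<in>{1..m} - S. x j) \<in> L m"
      by (intro fs_mult[OF F])
  qed
qed

lemma EC_phi:
  assumes pm: "\<And>j. e j = 1 \<or> e j = -1" and m: "m \<le> n"
  shows "phi e m (EC m x y) = EC m x (\<lambda>j. e j * y j)"
proof -
  have F: "fieldset (L m)" using L_fs[OF m] .
  have neg1: "(-1::'a) ^ k \<in> K" for k using fs_pow[OF fsK fs_neg[OF fsK fs1[OF fsK]]] .
  have xK: "(\<Prod>j\<in>{1..m} - S. x j) \<in> K" for S using m by (intro fs_prod[OF fsK]) (auto intro!: Kx)
  have yL: "(\<Prod>j\<in>S. y j) \<in> L m" if "S \<subseteq> {1..m}" for S using yS_L[OF m that] by (simp add: yS_def)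
  have trm: "phi e m ((-1) ^ (card S div 2) * (\<Prod>j\<in>S. y j) * (\<Prod>j\<in>{1..m} - S. x j)) =
      (-1) ^ (card S div 2) * (\<Prod>j\<in>S. e j * y j) * (\<Prod>j\<in>{1..m} - S. x j)"
    if S: "S \<subseteq> {1..m}" for S
  proof -
    have fS: "finite S" using S finite_subset by blast
    have yi: "y i \<in> L m" if "i \<in> S" for i
    proof -
      have "1 \<le> i" "i \<le> m" using S that by auto
      thus ?thesis by (rule y_L)
    qed
    have "phi e m (\<Prod>j\<in>S. y j) = (\<Prod>j\<in>S. phi e m (y j))"
      by (rule phi_prod[where e=e, OF pm m fS]) (rule yi)
    also have "\<dots> = (\<Prod>j\<in>S. e j * y j)"
    proof (rule prod.cong[OF refl])
      fix j assume "j \<in> S"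
      hence "1 \<le> j" "j \<le> m" using S by auto
      thus "phi e m (y j) = e j * y j" by (rule phi_y[where e=e, OF pm _ _ m])
    qed
    finally have "phi e m (\<Prod>j\<in>S. y j) = (\<Prod>j\<in>S. e j * y j)" .
    moreover have "phi e m ((-1) ^ (card S div 2)) = (-1) ^ (card S div 2)" using phi_K[where e=e, OF pm m neg1] .
    moreover have "phi e m (\<Prod>j\<in>{1..m} - S. x j) = (\<Prod>j\<in>{1..m} - S. x j)" using phi_K[where e=e, OF pm m xK] .
    moreover have AL: "(-1::'a) ^ (card S div 2) \<in> L m" using neg1 K_L by auto
    moreover have CL: "(\<Prod>j\<in>{1..m} - S. x j) \<in> L m" using xK K_L by auto
    moreover have "phi e m ((-1) ^ (card S div 2) * (\<Prod>j\<in>S. y j) * (\<Prod>j\<in>{1..m} - S. x j)) =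
        phi e m ((-1) ^ (card S div 2) * (\<Prod>j\<in>S. y j)) * phi e m (\<Prod>j\<in>{1..m} - S. x j)"
      by (rule phi_mult[where e=e, OF pm m fs_mult[OF F AL yL[OF S]] CL])
    moreover have "phi e m ((-1) ^ (card S div 2) * (\<Prod>j\<in>S. y j)) =
        phi e m ((-1) ^ (card S div 2)) * phi e m (\<Prod>j\<in>S. y j)"
      by (rule phi_mult[where e=e, OF pm m AL yL[OF S]])
    ultimately show ?thesis by simp
  qed
  have "phi e m (EC m x y) = (\<Sum>S\<in>{S. S \<subseteq> {1..m} \<and> even (card S)}.
      phi e m ((-1) ^ (card S div 2) * (\<Prod>j\<in>S. y j) * (\<Prod>j\<in>{1..m} - S. x j)))"
    unfolding EC_def
  proof (rule phi_sum[where e=e, OF pm m])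
    fix S assume S: "S \<in> {S. S \<subseteq> {1..m} \<and> even (card S)}"
    show "(-1) ^ (card S div 2) * (\<Prod>j\<in>S. y j) * (\<Prod>j\<in>{1..m} - S. x j) \<in> L m"
    proof -
      have S': "S \<subseteq> {1..m}" using S by simp
      have AL: "(-1::'a) ^ (card S div 2) \<in> L m" using neg1 K_L by auto
      have CL: "(\<Prod>j\<in>{1..m} - S. x j) \<in> L m" using xK K_L by auto
      show ?thesis by (rule fs_mult[OF F fs_mult[OF F AL yL[OF S']] CL])
    qed
  qed simp
  also have "\<dots> = EC m x (\<lambda>j. e j * y j)" unfolding EC_def by (rule sum.cong[OF refl], rule trm, simp)
  finally show ?thesis .
qed

definition ce :: "nat \<Rightarrow> (nat \<Rightarrow> 'a) \<Rightarrow> nat set \<Rightarrow> 'a" where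
  "ce m e S = (if even (card S) then (-1) ^ (card S div 2) * (\<Prod>j\<in>S. e j) * (\<Prod>j\<in>{1..m} - S. x j) else 0)"

lemma EC_expand:
  "EC m x (\<lambda>j. e j * y j) = (\<Sum>S\<in>Pow {1..m}. ce m e S * yS y S)"
proof -
  have "{S. S \<subseteq> {1..m} \<and> even (card S)} = {S \<in> Pow {1..m}. even (card S)}" by auto
  hence "EC m x (\<lambda>j. e j * y j) = (\<Sum>S\<in>{S \<in> Pow {1..m}. even (card S)}.
      (-1) ^ (card S div 2) * (\<Prod>j\<in>S. e j * y j) * (\<Prod>j\<in>{1..m} - S. x j))"
    unfolding EC_def by simp
  also have "\<dots> = (\<Sum>S\<in>Pow {1..m}. if even (card S) then
      (-1) ^ (card S div 2) * (\<Prod>j\<in>S. e j * y j) * (\<Prod>j\<in>{1..m} - S. x j) else 0)"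
    by (rule sum.inter_filter) simp
  also have "\<dots> = (\<Sum>S\<in>Pow {1..m}. ce m e S * yS y S)"
    by (rule sum.cong) (auto simp: ce_def yS_def prod.distrib)
  finally show ?thesis .
qed

lemma ce_K: "m \<le> n \<Longrightarrow> (\<And>j. e j = 1 \<or> e j = -1) \<Longrightarrow> ce m e S \<in> K"
proof -
  assume m: "m \<le> n" and pm: "\<And>j. e j = 1 \<or> e j = -1"
  have eK: "e j \<in> K" for j using pm[of j] fs1[OF fsK] fs_neg[OF fsK fs1[OF fsK]] by auto
  have pe: "(\<Prod>j\<in>S. e j) \<in> K"
    by (cases "finite S") (auto intro!: fs_prod[OF fsK] eK fs1[OF fsK])
  have px: "(\<Prod>j\<in>{1..m} - S. x j) \<in> K" using m by (intro fs_prod[OF fsK]) (auto intro!: Kx)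
  show ?thesis unfolding ce_def using pe px
    by (auto intro!: fs_mult[OF fsK] fs_pow[OF fsK] fs_neg[OF fsK] fs1[OF fsK] fs0[OF fsK])
qed

end



lemma card_set_mset_le: "card (set_mset M) \<le> size M"
  by (induction M) (auto simp: card_insert_if)

lemma card_even_subsets:
  assumes m: "1 \<le> m"
  shows "card {S \<in> Pow {1..m}. even (card S)} = 2 ^ (m - 1)"
proof -
  define f where "f T = (if even (card T) then T else insert (1::nat) T)" for T
  have fin: "finite T" if "T \<in> Pow {2..m}" for T using that finite_subset by auto
  have inj: "inj_on f (Pow {2..m})"
  proof (rule inj_onI)
    fix T T' assume T: "T \<in> Pow {2..m}" "T' \<in> Pow {2..m}" "f T = f T'"
    have "1 \<notin> T" "1 \<notin> T'" using T by auto
    hence "f T - {1} = T" "f T' - {1} = T'" unfolding f_def by auto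
    thus "T = T'" using T(3) by metis
  qed
  have img: "f ` Pow {2..m} = {S \<in> Pow {1..m}. even (card S)}"
  proof
    show "f ` Pow {2..m} \<subseteq> {S \<in> Pow {1..m}. even (card S)}"
    proof
      fix S assume "S \<in> f ` Pow {2..m}"
      then obtain T where T: "T \<in> Pow {2..m}" "S = f T" by blast
      have "1 \<notin> T" using T by auto
      thus "S \<in> {S \<in> Pow {1..m}. even (card S)}" using T m fin[OF T(1)] unfolding f_def by auto
    qed
  next
    show "{S \<in> Pow {1..m}. even (card S)} \<subseteq> f ` Pow {2..m}"
    proof
      fix S assume S: "S \<in> {S \<in> Pow {1..m}. even (card S)}"
      have fS: "finite S" using S finite_subset by auto
      define T where "T = S - {1}"
      have T: "T \<in> Pow {2..m}" using S by (auto simp: T_def)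
      have "f T = S"
      proof (cases "1 \<in> S")
        case True
        hence "card T = card S - 1" "card S > 0" using fS by (auto simp: T_def card_gt_0_iff)
        hence "odd (card T)" using S by auto
        thus ?thesis using True unfolding f_def T_def by auto
      next
        case False
        hence "T = S" by (auto simp: T_def)
        thus ?thesis using S unfolding f_def by auto
      qed
      thus "S \<in> f ` Pow {2..m}" using T by blast
    qed
  qed
  have "card {S \<in> Pow {1..m}. even (card S)} = card (Pow {2..m})"
    using card_image[OF inj] img by simp
  also have "\<dots> = 2 ^ (m - 1)" by (simp add: card_Pow)
  finally show ?thesis .
qed

context tow
begin

lemma phi_yS:
  assumes pm: "\<And>j. e j = 1 \<or> e j = -1" and k: "k \<le> n" and S: "S \<subseteq> {1..k}"
  shows "phi e k (yS y S) = (\<Prod>j\<in>S. e j) * yS y S"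
proof -
  have fS: "finite S" using S finite_subset by blast
  have yi: "y i \<in> L k" if "i \<in> S" for i
  proof -
    have "1 \<le> i" "i \<le> k" using S that by auto
    thus ?thesis by (rule y_L)
  qed
  have "phi e k (\<Prod>j\<in>S. y j) = (\<Prod>j\<in>S. phi e k (y j))"
    by (rule phi_prod[where e=e, OF pm k fS]) (rule yi)
  also have "\<dots> = (\<Prod>j\<in>S. e j * y j)"
  proof (rule prod.cong[OF refl])
    fix j assume "j \<in> S"
    hence "1 \<le> j" "j \<le> k" using S by auto
    thus "phi e k (y j) = e j * y j" by (rule phi_y[where e=e, OF pm _ _ k])
  qed
  finally show ?thesis unfolding yS_def by (simp add: prod.distrib)
qed

lemma phi_expand:
  assumes pm: "\<And>j. e j = 1 \<or> e j = -1" and k: "k \<le> n" and c: "\<And>S. c S \<in> K"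
  shows "phi e k (\<Sum>S\<in>Pow {1..k}. c S * yS y S) = (\<Sum>S\<in>Pow {1..k}. c S * (\<Prod>j\<in>S. e j) * yS y S)"
proof -
  have mem: "c S * yS y S \<in> L k" if "S \<in> Pow {1..k}" for S
    using fs_mult[OF L_fs[OF k]] c K_L yS_L[OF k] that by blast
  have "phi e k (\<Sum>S\<in>Pow {1..k}. c S * yS y S) = (\<Sum>S\<in>Pow {1..k}. phi e k (c S * yS y S))"
    by (rule phi_sum[where e=e, OF pm k]) (simp, erule mem)
  also have "\<dots> = (\<Sum>S\<in>Pow {1..k}. c S * (\<Prod>j\<in>S. e j) * yS y S)"
  proof (rule sum.cong[OF refl])
    fix S assume S: "S \<in> Pow {1..k}"
    have "phi e k (c S * yS y S) = phi e k (c S) * phi e k (yS y S)"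
      using phi_mult[where e=e, OF pm k] c K_L yS_L[OF k] S by blast
    also have "\<dots> = c S * ((\<Prod>j\<in>S. e j) * yS y S)"
      using phi_K[where e=e, OF pm k c] phi_yS[OF pm k] S by simp
    finally show "phi e k (c S * yS y S) = c S * (\<Prod>j\<in>S. e j) * yS y S" by (simp add: mult_ac)
  qed
  finally show ?thesis .
qed

lemma fixed_even:
  assumes m: "m \<le> n" and u: "u \<in> L m" and fx: "phi (\<lambda>_. -1) m u = u"
  shows "\<exists>c. (\<forall>S. c S \<in> K) \<and> u = (\<Sum>S\<in>{S \<in> Pow {1..m}. even (card S)}. c S * yS y S)"
proof -
  have pm: "\<And>j. (\<lambda>_. -1::'a) j = 1 \<or> (\<lambda>_. -1::'a) j = -1" by simp
  obtain c where c: "\<And>S. c S \<in> K" "u = (\<Sum>S\<in>Pow {1..m}. c S * yS y S)" using expand[OF m u] by blast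
  have "phi (\<lambda>_. -1) m u = (\<Sum>S\<in>Pow {1..m}. c S * (\<Prod>j\<in>S. -1) * yS y S)"
    unfolding c(2) by (rule phi_expand[OF pm m c(1)])
  hence "(\<Sum>S\<in>Pow {1..m}. (c S - c S * (\<Prod>j\<in>S. -1)) * yS y S) = 0"
    using fx c(2) by (simp add: algebra_simps sum_subtractf)
  moreover have "c S - c S * (\<Prod>j\<in>S. -1) \<in> K" for S
  proof -
    have pK: "(\<Prod>j\<in>S. -1::'a) \<in> K" using fs_pow[OF fsK fs_neg[OF fsK fs1[OF fsK]], of "card S"] by simp
    show ?thesis by (rule fs_diff[OF fsK c(1) fs_mult[OF fsK c(1) pK]])
  qed
  ultimately have z: "c S - c S * (\<Prod>j\<in>S. -1) = 0" if "S \<subseteq> {1..m}" for S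
    using indep[OF m, of "\<lambda>S. c S - c S * (\<Prod>j\<in>S. -1)"] that by blast
  have codd: "c S = 0" if "S \<subseteq> {1..m}" "odd (card S)" for S
  proof -
    have "(\<Prod>j\<in>S. (-1::'a)) = -1" using that by simp
    thus ?thesis using z[OF that(1)] by simp
  qed
  have "u = (\<Sum>S\<in>Pow {1..m}. if even (card S) then c S * yS y S else 0)"
    unfolding c(2) by (rule sum.cong) (auto simp: codd)
  also have "\<dots> = (\<Sum>S\<in>{S \<in> Pow {1..m}. even (card S)}. c S * yS y S)"
    by (rule sum.inter_filter[symmetric]) simp
  finally show ?thesis using c(1) by blast
qed

end



lemma combine_map:
  "ring.combine (RR::'a::field ring) (map c Ls) (map g Ls) = sum_list (map (\<lambda>S. c S * g S) Ls)"
proof -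
  interpret field "RR::'a ring" by (rule field_from_type_algebra)
  show ?thesis by (induction Ls) simp_all
qed

lemma fieldset_subring: "fieldset V \<Longrightarrow> subring V (RR::'a::field ring)"
proof -
  assume F: "fieldset V"
  interpret field "RR::'a ring" by (rule field_from_type_algebra)
  show ?thesis by (rule subringI) (simp_all add: fs1[OF F] fs_neg[OF F] fs_mult[OF F] fs_add[OF F])
qed

lemma (in ring) filter_base_len:
  assumes K: "subfield K R"
  shows "set Us \<subseteq> carrier R \<Longrightarrow> \<exists>Vs. independent K Vs \<and> Span K Vs = Span K Us \<and> length Vs \<le> length Us"
proof (induction Us)
  case Nil thus ?case by auto
next
  case (Cons u Us)
  then obtain Vs where Vs: "independent K Vs" "Span K Vs = Span K Us" "length Vs \<le> length Us"
    by auto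
  show ?case
  proof (cases "u \<in> Span K Us")
    case True
    hence "Span K (u # Us) = Span K Us"
      using Span_base_incl[OF K] mono_Span_subset[OF K]
      by (metis Cons.prems insert_subset list.simps(15) subset_antisym)
    thus ?thesis using Vs by (intro exI[of _ Vs]) auto
  next
    case False
    hence "Span K (u # Vs) = Span K (u # Us)" and "independent K (u # Vs)"
      using independent.li_Cons[of u K Vs] Cons(2) Vs by auto
    thus ?thesis using Vs(3) by (intro exI[of _ "u # Vs"]) auto
  qed
qed

context tow
begin

lemma phi_pow:
  assumes pm: "\<And>j. e j = 1 \<or> e j = -1" and k: "k \<le> n" and u: "u \<in> L k"
  shows "phi e k (u ^ i) = phi e k u ^ i"
proof (induction i)
  case 0 thus ?case using phi_1[where e=e, OF pm k] by simp
next
  case (Suc i)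
  have "phi e k (u * u ^ i) = phi e k u * phi e k (u ^ i)"
    by (rule phi_mult[where e=e, OF pm k u fs_pow[OF L_fs[OF k] u]])
  thus ?case using Suc by simp
qed

end

theorem mainTheorem13:
  fixes x y :: "nat \<Rightarrow> 'a::field_char_0" and m n :: nat
  assumes "1 \<le> m" and "m \<le> n"
    and "alg_indep_over_Q x {1..n}"
    and "\<And>j. j \<in> {1..n} \<Longrightarrow> (y j)\<^sup>2 = 1 - (x j)\<^sup>2"
  shows "ring.dimension (ring_of_type_algebra :: 'a ring) (2 ^ (m - 1))
           (generate_field (ring_of_type_algebra :: 'a ring) (x ` {1..n}))
           (generate_field (ring_of_type_algebra :: 'a ring) (insert (EC m x y) (x ` {1..n})))"
proof -
  interpret field "RR::'a ring" by (rule field_from_type_algebra)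
  define I where "I = {1..n}"
  define K where "K = generate_field (RR::'a ring) (x ` I)"
  define C where "C = EC m x y"
  have finI: "finite I" by (simp add: I_def)
  have ind: "alg_indep_over_Q x I" using assms(3) by (simp add: I_def)
  have Ksub: "subfield K RR" unfolding K_def by (rule generate_field_is_subfield) simp
  have G0: "0 \<in> K" using zero_in_generate[of "x ` I"] by (simp add: K_def)
  have G1: "1 \<in> K" using generate_field.one[of RR "x ` I"] by (simp add: K_def)
  have Gadd: "a + b \<in> K" if "a \<in> K" "b \<in> K" for a b
    using generate_field.eng_add[of a RR "x ` I" b] that by (simp add: K_def)
  have Gmult: "a * b \<in> K" if "a \<in> K" "b \<in> K" for a b
    using generate_field.eng_mult[of a RR "x ` I" b] that by (simp add: K_def)
  have Gneg: "- a \<in> K" if "a \<in> K" for a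
    using generate_field.a_inv[of a RR "x ` I"] that by (simp add: K_def)
  have Ginv: "inverse a \<in> K" if "a \<in> K" for a
  proof (cases "a = 0")
    case True thus ?thesis using G0 by simp
  next
    case False
    thus ?thesis using generate_field.m_inv[of a RR "x ` I"] that by (simp add: K_def RR_inv)
  qed
  have fsK: "fieldset K" unfolding fieldset_def
    by (intro conjI ballI G0 G1 Gadd Gmult Gneg Ginv; assumption)
  interpret T: tow x y n K
  proof
    show "fieldset K" by (rule fsK)
    show "x i \<in> K" if "i \<in> {1..n}" for i
      using that generate_field.incl[of "x i" "x ` I" RR] by (simp add: K_def I_def)
    show "u ^ 2 \<noteq> DD x T" if "T \<subseteq> {1..n}" "T \<noteq> {}" "u \<in> K" for T u
      using nonsq_K[OF finI ind, of T u] that by (simp add: DD_def K_def I_def)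
    show "y j ^ 2 = 1 - x j ^ 2" if "j \<in> {1..n}" for j using assms(4) that .
    show "1 - x j ^ 2 \<noteq> 0" if "j \<in> {1..n}" for j using one_minus_sq_nz[OF finI _ ind] that by (simp add: I_def)
  qed
  have mn: "m \<le> n" using assms(2) .
  have CL: "C \<in> T.L m" unfolding C_def by (rule T.EC_L[OF mn])
  have fsL: "fieldset (T.L m)" using T.L_fs[OF mn] .
  have Lsubring: "subring (T.L m) RR" by (rule fieldset_subring[OF fsL])
  have LsubAlg: "subalgebra K (T.L m) RR"
    using subring.axioms(1)[OF Lsubring] fs_mult[OF fsL] T.K_L
    unfolding subalgebra_def subalgebra_axioms_def by auto
  obtain Ls where Ls: "distinct Ls" "set Ls = Pow {1..m}"
    using finite_distinct_list[of "Pow {1..m}"] by auto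
  obtain Es where Es: "distinct Es" "set Es = {S \<in> Pow {1..m}. even (card S)}"
    using finite_distinct_list[of "{S \<in> Pow {1..m}. even (card S)}"] by auto
  have span_mem: "(\<Sum>S\<in>set Ms. c S * yS y S) \<in> Span K (map (yS y) Ms)"
    if "distinct Ms" "\<And>S. c S \<in> K" for Ms c
  proof -
    have eq: "Span K (map (yS y) Ms) = {combine Ks (map (yS y) Ms) | Ks. set Ks \<subseteq> K}"
      by (rule Span_eq_combine_set[OF Ksub]) simp
    have c1: "combine (map c Ms) (map (yS y) Ms) = (\<Sum>S\<in>set Ms. c S * yS y S)"
      using combine_map[of c Ms "yS y"] that(1) by (simp add: sum_list_distinct_conv_sum_set)
    have c2: "set (map c Ms) \<subseteq> K" using that(2) by auto
    show ?thesis unfolding eq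
      by (rule CollectI, rule exI[of _ "map c Ms"], rule conjI[OF c1[symmetric] c2])
  qed
  have L_Span: "T.L m \<subseteq> Span K (map (yS y) Ls)"
  proof
    fix u assume "u \<in> T.L m"
    then obtain c where c: "\<forall>S. c S \<in> K" "u = (\<Sum>S\<in>Pow {1..m}. c S * yS y S)"
      using T.expand[OF mn] by blast
    thus "u \<in> Span K (map (yS y) Ls)" using span_mem[OF Ls(1), of c] Ls(2) by simp
  qed
  have fdS: "finite_dimension K (Span K (map (yS y) Ls))"
    by (rule Span_finite_dimension[OF Ksub]) simp
  have fdL: "finite_dimension K (T.L m)"
    by (rule subalbegra_incl_imp_finite_dimension[OF Ksub fdS LsubAlg L_Span])
  have Ccar: "C \<in> carrier RR" by simp
  have alg: "(algebraic over K) C" by (rule finite_dimension_imp_algebraic[OF Ksub Lsubring fdL CL])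
  have sfE: "subfield (simple_extension K C) RR" using simple_extension_is_subfield[OF Ksub Ccar] alg by simp
  have Eeq: "generate_field RR (insert C (x ` I)) = simple_extension K C"
  proof
    have "x ` I \<subseteq> K" unfolding K_def by (auto intro: generate_field.incl)
    hence "insert C (x ` I) \<subseteq> simple_extension K C"
      using simple_extension_mem[OF subfieldE(1)[OF Ksub] Ccar]
        simple_extension_incl[OF subfieldE(3)[OF Ksub] Ccar] by auto
    thus "generate_field RR (insert C (x ` I)) \<subseteq> simple_extension K C"
      by (intro generate_field_min_subfield1[OF _ sfE]) auto
  next
    let ?G = "generate_field RR (insert C (x ` I))"
    have sG: "subfield ?G RR" by (rule generate_field_is_subfield) simp
    have "K \<subseteq> ?G" unfolding K_def
      by (rule generate_field_min_subfield1[OF _ sG]) (auto intro: generate_field.incl)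
    moreover have "C \<in> ?G" by (auto intro: generate_field.incl)
    ultimately show "simple_extension K C \<subseteq> ?G"
      using simple_extension_minimal[OF subfieldE(1)[OF Ksub] Ccar] subfieldE(1)[OF sG] by blast
  qed
  have dimE: "dimension (Polynomials.degree (Irr K C)) K (simple_extension K C)"
    by (rule dimension_simple_extension[OF Ksub Ccar alg])
  have deg_le: "Polynomials.degree (Irr K C) \<le> 2 ^ (m - 1)"
  proof -
    have pm1: "\<And>j. (\<lambda>_. -1::'a) j = 1 \<or> (\<lambda>_. -1::'a) j = -1" by simp
    define V where "V = {u \<in> T.L m. T.phi (\<lambda>_. -1) m u = u}"
    have V1: "1 \<in> V" using fs1[OF fsL] T.phi_1[where e="\<lambda>_. -1", OF pm1 mn] by (simp add: V_def)
    have Vneg: "- h \<in> V" if "h \<in> V" for h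
      using that fs_neg[OF fsL] T.phi_neg[where e="\<lambda>_. -1", OF pm1 mn] by (simp add: V_def)
    have Vmult: "h1 * h2 \<in> V" if "h1 \<in> V" "h2 \<in> V" for h1 h2
      using that fs_mult[OF fsL] T.phi_mult[where e="\<lambda>_. -1", OF pm1 mn] by (simp add: V_def)
    have Vadd: "h1 + h2 \<in> V" if "h1 \<in> V" "h2 \<in> V" for h1 h2
      using that fs_add[OF fsL] T.phi_add[where e="\<lambda>_. -1", OF pm1 mn] by (simp add: V_def)
    have Vsub: "subring V RR"
      by (rule subringI) (simp_all add: V1 Vneg Vmult Vadd)
    have KV: "K \<subseteq> V" using T.K_L T.phi_K[where e="\<lambda>_. -1", OF pm1 mn] by (auto simp: V_def)
    have CV: "C \<in> V"
    proof -
      have "T.phi (\<lambda>_. -1) m C = EC m x (\<lambda>j. -1 * y j)" unfolding C_def by (rule T.EC_phi[OF pm1 mn])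
      also have "EC m x (\<lambda>j. -1 * y j) = EC m x y" unfolding EC_def
      proof (rule sum.cong[OF refl])
        fix S assume S: "S \<in> {S. S \<subseteq> {1..m} \<and> even (card S)}"
        have "(\<Prod>j\<in>S. -1 * y j) = (\<Prod>j\<in>S. (-1::'a)) * (\<Prod>j\<in>S. y j)" by (rule prod.distrib)
        also have "(\<Prod>j\<in>S. (-1::'a)) = 1" using S by (simp add: neg_one_even_power)
        finally have "(\<Prod>j\<in>S. -1 * y j) = (\<Prod>j\<in>S. y j)" by simp
        thus "(-1) ^ (card S div 2) * (\<Prod>j\<in>S. -1 * y j) * (\<Prod>j\<in>{1..m} - S. x j) =
            (-1) ^ (card S div 2) * (\<Prod>j\<in>S. y j) * (\<Prod>j\<in>{1..m} - S. x j)" by simp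
      qed
      finally show ?thesis using CL by (simp add: V_def C_def)
    qed
    have "simple_extension K C = \<Inter> { K'. subring K' RR \<and> K \<subseteq> K' \<and> C \<in> K' }"
      by (rule simple_extension_minimal[OF subfieldE(1)[OF Ksub] Ccar])
    hence se_V: "simple_extension K C \<subseteq> V"
      by (simp add: Inter_lower Vsub KV CV)
    have V_Span: "V \<subseteq> Span K (map (yS y) Es)"
    proof
      fix u assume "u \<in> V"
      hence "u \<in> T.L m" "T.phi (\<lambda>_. -1) m u = u" by (auto simp: V_def)
      then obtain c where c: "\<forall>S. c S \<in> K" "u = (\<Sum>S\<in>{S \<in> Pow {1..m}. even (card S)}. c S * yS y S)"
        using T.fixed_even[OF mn] by blast
      thus "u \<in> Span K (map (yS y) Es)" using span_mem[OF Es(1), of c] Es(2) by simp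
    qed
    define d where "d = Polynomials.degree (Irr K C)"
    have indep_exp: "independent K (exp_base C d)" unfolding d_def by (rule exp_base_independent[OF Ksub Ccar alg])
    have "set (exp_base C d) \<subseteq> Span K (exp_base C d)" by (rule Span_base_incl[OF Ksub]) simp
    hence sub1: "set (exp_base C d) \<subseteq> Span K (map (yS y) Es)"
      using Span_exp_base[OF Ksub Ccar alg] se_V V_Span unfolding d_def by blast
    obtain Vs where Vs: "independent K Vs" "Span K Vs = Span K (map (yS y) Es)" "length Vs \<le> length (map (yS y) Es)"
      using filter_base_len[OF Ksub, of "map (yS y) Es"] by auto
    have "length (exp_base C d) \<le> length Vs"
      using independent_length_le[OF Ksub indep_exp Vs(1)] sub1 Vs(2) by simp
    moreover have "length (exp_base C d) = d" by (simp add: exp_base_def)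
    moreover have "length (map (yS y) Es) = 2 ^ (m - 1)"
      using distinct_card[OF Es(1)] Es(2) card_even_subsets[OF assms(1)] by simp
    ultimately show ?thesis using Vs(3) unfolding d_def by simp
  qed
  have deg_ge: "2 ^ (m - 1) \<le> Polynomials.degree (Irr K C)"
  proof -
    define P where "P = Irr K C"
    have Pcar: "P \<in> carrier (univ_poly (RR::'a ring) K)" unfolding P_def by (rule IrrE(1)[OF Ksub Ccar alg])
    have Pev: "eval P C = 0" using IrrE(4)[OF Ksub Ccar alg] by (simp add: P_def)
    have Pnz: "P \<noteq> []" using IrrE(2)[OF Ksub Ccar alg] unfolding P_def ring_irreducible_def univ_poly_zero by auto
    have PK: "set P \<subseteq> K" using Pcar polynomial_incl unfolding sym[OF univ_poly_carrier] by auto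
    have Ppr: "P \<in> carrier (poly_ring RR)"
      using Pcar carrier_polynomial[OF subfieldE(1)[OF Ksub]] unfolding sym[OF univ_poly_carrier] by auto
    have evphi: "eval p u \<in> T.L m \<and> T.phi e m (eval p u) = eval p (T.phi e m u)"
      if "set p \<subseteq> K" "u \<in> T.L m" "\<And>j. e j = 1 \<or> e j = -1" for p u e
      using that(1)
    proof (induction p)
      case Nil thus ?case using fs0[OF fsL] T.phi_0[where e=e, OF that(3) mn] by simp
    next
      case (Cons a p)
      have aK: "a \<in> K" and pK: "set p \<subseteq> K" using Cons.prems by auto
      have ev: "eval (a # p) v = a * v ^ length p + eval p v" for v by simp
      have aL: "a \<in> T.L m" using aK T.K_L by auto
      have uL: "u ^ length p \<in> T.L m" using fs_pow[OF fsL that(2)] .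
      from Cons.IH[OF pK] have IH: "eval p u \<in> T.L m" "T.phi e m (eval p u) = eval p (T.phi e m u)" by auto
      have mem: "a * u ^ length p \<in> T.L m" using fs_mult[OF fsL aL uL] .
      show ?case unfolding ev
        using fs_add[OF fsL mem IH(1)] T.phi_add[where e=e, OF that(3) mn mem IH(1)]
          T.phi_mult[where e=e, OF that(3) mn aL uL]
          T.phi_K[where e=e, OF that(3) mn aK] T.phi_pow[where e=e, OF that(3) mn that(2)] IH(2) by simp
    qed
    define eT where "eT T = (\<lambda>j::nat. if j \<in> T then -1 else 1::'a)" for T :: "nat set"
    define r where "r T = EC m x (\<lambda>j. eT T j * y j)" for T
    have pmT: "\<And>j. eT T j = 1 \<or> eT T j = -1" for T by (simp add: eT_def)
    have root: "is_root P (r T)" for T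
    proof -
      have "r T = T.phi (eT T) m C" unfolding r_def C_def by (rule T.EC_phi[OF pmT mn, symmetric])
      hence "eval P (r T) = T.phi (eT T) m (eval P C)" using evphi[OF PK CL pmT] by simp
      also have "\<dots> = 0" using Pev T.phi_0[where e="eT T", OF pmT mn] by simp
      finally show ?thesis unfolding is_root_def using Pnz by simp
    qed
    have injr: "inj_on r (Pow {2..m})"
    proof (rule inj_onI)
      fix T T' assume T: "T \<in> Pow {2..m}" and T': "T' \<in> Pow {2..m}" and eq: "r T = r T'"
      show "T = T'"
      proof (rule ccontr)
        assume ne: "T \<noteq> T'"
        have "\<exists>j. (j \<in> T) \<noteq> (j \<in> T')" using ne by (simp add: set_eq_iff)
        then obtain j where j: "(j \<in> T) \<noteq> (j \<in> T')" by (elim exE)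
        have j2: "j \<in> {2..m}" using j T T' by auto
        define D where "D S = T.ce m (eT T) S - T.ce m (eT T') S" for S
        have "(\<Sum>S\<in>Pow {1..m}. D S * yS y S) = r T - r T'"
          unfolding D_def r_def T.EC_expand by (simp add: algebra_simps sum_subtractf)
        hence Dsum: "(\<Sum>S\<in>Pow {1..m}. D S * yS y S) = 0" using eq by simp
        have DK: "\<forall>S. D S \<in> K"
        proof
          fix S show "D S \<in> K" unfolding D_def by (rule fs_diff[OF fsK T.ce_K[OF mn pmT] T.ce_K[OF mn pmT]])
        qed
        have sub: "{1, j} \<subseteq> {1..m}" using j2 by auto
        have D0: "D {1, j} = 0" by (rule T.indep[OF mn DK Dsum sub])
        define Xp where "Xp = (\<Prod>i\<in>{1..m} - {1, j}. x i)"
        have "\<forall>i\<in>{1..m} - {1, j}. x i \<noteq> 0"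
        proof
          fix i assume "i \<in> {1..m} - {1, j}"
          hence "i \<in> I" using mn by (auto simp: I_def)
          thus "x i \<noteq> 0" by (rule x_nz[OF finI _ ind])
        qed
        hence Xpnz: "Xp \<noteq> 0" unfolding Xp_def by simp
        have j1: "j \<noteq> 1" using j2 by auto
        have ce1j: "T.ce m e {1, j} = - (e 1 * e j) * Xp" for e
          using j1 by (simp add: T.ce_def Xp_def)
        have e1: "eT T 1 = 1" "eT T' 1 = 1" using T T' by (auto simp: eT_def)
        have "D {1, j} = (eT T' j - eT T j) * Xp" unfolding D_def ce1j e1 by (simp add: algebra_simps)
        moreover have "eT T' j - eT T j \<noteq> 0" using j by (auto simp: eT_def)
        ultimately show False using D0 Xpnz by simp
      qed
    qed
    have "card (r ` Pow {2..m}) = 2 ^ (m - 1)" using card_image[OF injr] by (simp add: card_Pow)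
    moreover have "r ` Pow {2..m} \<subseteq> set_mset (roots P)" using roots_mem_iff_is_root[OF Ppr] root by auto
    hence "card (r ` Pow {2..m}) \<le> card (set_mset (roots P))" by (intro card_mono) auto
    moreover have "card (set_mset (roots P)) \<le> size (roots P)" by (rule card_set_mset_le)
    moreover have "size (roots P) \<le> Polynomials.degree P" by (rule size_roots_le_degree[OF Ppr])
    ultimately show ?thesis unfolding P_def by linarith
  qed
  have "Polynomials.degree (Irr K C) = 2 ^ (m - 1)" using deg_le deg_ge by simp
  thus ?thesis using dimE Eeq unfolding K_def I_def C_def by simp
qed


end
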